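(* Against an oblivious adversary, it is possible to gather two robots having the same speed if, for both robots, the sum of the wait time and the computation delay in every cycle is always greater than some fixed value $\tau>0$: there is a randomized algorithm such that the robots gather with positive probability.
   Context: Two robots are anonymous, oblivious (no memory of past cycles), silent (no communication) points in the Euclidean plane with no common coordinate system, each having access to random bits. Each robot repeatedly executes a cycle: it waits (wait time $\mathcal{W}\ge 0$), looks (obtains a snapshot of the other robot's current position, which may be in motion), has a computation delay $\mathcal{C}\ge0$, then moves to a destination computed from the snapshot and its random bits, reaching it in the same cycle (rigid movement). A robot that looks and finds the other robot at its own position decides it has gathered and stops; gathering means both robots are at the same point. The scheduler is an adversary choosing the wait times and computation delays of all cycles, subject to $\mathcal{W}+\mathcal{C}>\tau$ in every cycle of each robot; an oblivious adversary knows the algorithm but not the outcomes of random bits, so it fixes all these values before the execution. *)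

theory Defs
  imports "HOL-Probability.Probability"
begin

type_synonym point = "real ^ 2"

text \<open>Robots are indexed by bool; the other robot of r is (\<not> r).\<close>

text \<open>Unit, orientation, handedness and origin
  are unknown to the robot and chosen by the adversary.\<close>
definition is_similarity :: "(point \<Rightarrow> point) \<Rightarrow> bool" where
  "is_similarity f \<longleftrightarrow>
     (\<exists>c U b. c > 0 \<and> orthogonal_transformation U \<and> (\<forall>x. f x = c *\<^sub>R U x + b))"

text \<open>Source of randomness: independent fair coins; bit i of robot r in cycle k
  is the coordinate (r,k,i).\<close>
definition coin_space :: "(bool \<times> nat \<times> nat \<Rightarrow> bool) measure" where
  "coin_space = PiM UNIV (\<lambda>_. measure_pmf (bernoulli_pmf (1/2)))"

text \<open>An (anonymous, oblivious) algorithm: given the robot's own position and the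
  snapshot of the other robot, both in local coordinates, and a stream of random
  bits, it returns the destination in local coordinates.\<close>
type_synonym algorithm = "point \<Rightarrow> point \<Rightarrow> (nat \<Rightarrow> bool) \<Rightarrow> point"

definition look_time :: "(bool \<Rightarrow> nat \<Rightarrow> real) \<Rightarrow> (bool \<Rightarrow> nat \<Rightarrow> real) \<Rightarrow> bool \<Rightarrow> nat \<Rightarrow> real" where
  "look_time S W r k = S r k + W r k"

definition halts_at ::
  "(bool \<Rightarrow> real \<Rightarrow> point) \<Rightarrow> (bool \<Rightarrow> nat \<Rightarrow> real) \<Rightarrow> (bool \<Rightarrow> nat \<Rightarrow> real) \<Rightarrow> bool \<Rightarrow> nat \<Rightarrow> bool" where
  "halts_at pos S W r k \<longleftrightarrow>
     pos (\<not> r) (look_time S W r k) = pos r (look_time S W r k)"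

text \<open>Cycle k of robot r is executed according to the model:
  wait W (stationary), look at time S+W, compute for C (stationary), then move
  rigidly along the straight segment at speed v to the destination, which ends
  the cycle; or, if the other robot is seen at its own position, stop forever.\<close>
definition cycle_ok ::
  "algorithm \<Rightarrow> real \<Rightarrow> (bool \<Rightarrow> nat \<Rightarrow> real) \<Rightarrow> (bool \<Rightarrow> nat \<Rightarrow> real) \<Rightarrow>
   (bool \<Rightarrow> point \<Rightarrow> point) \<Rightarrow> (bool \<times> nat \<times> nat \<Rightarrow> bool) \<Rightarrow>
   (bool \<Rightarrow> real \<Rightarrow> point) \<Rightarrow> (bool \<Rightarrow> nat \<Rightarrow> real) \<Rightarrow> bool \<Rightarrow> nat \<Rightarrow> bool" where
  "cycle_ok alg v W C \<phi> \<omega> pos S r k \<longleftrightarrow>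
     (let L = look_time S W r k; q = pos r (S r k); s = pos (\<not> r) L in
       (\<forall>t. S r k \<le> t \<and> t \<le> L + C r k \<longrightarrow> pos r t = q) \<and>
       (if s = q then (\<forall>t \<ge> S r k. pos r t = q)
        else (\<exists>d. \<phi> r d = alg (\<phi> r q) (\<phi> r s) (\<lambda>i. \<omega> (r, k, i)) \<and>
                  S r (Suc k) = L + C r k + dist q d / v \<and>
                  (\<forall>t. L + C r k \<le> t \<and> t \<le> S r (Suc k) \<longrightarrow>
                       pos r t = q + ((t - (L + C r k)) * v / dist q d) *\<^sub>R (d - q)))))"

definition exec_ok ::
  "algorithm \<Rightarrow> real \<Rightarrow> (bool \<Rightarrow> nat \<Rightarrow> real) \<Rightarrow> (bool \<Rightarrow> nat \<Rightarrow> real) \<Rightarrow>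
   (bool \<Rightarrow> point \<Rightarrow> point) \<Rightarrow> (bool \<Rightarrow> point) \<Rightarrow> (bool \<times> nat \<times> nat \<Rightarrow> bool) \<Rightarrow>
   (bool \<Rightarrow> real \<Rightarrow> point) \<Rightarrow> (bool \<Rightarrow> nat \<Rightarrow> real) \<Rightarrow> bool" where
  "exec_ok alg v W C \<phi> p0 \<omega> pos S \<longleftrightarrow>
     (\<forall>r. S r 0 = 0 \<and> pos r 0 = p0 r \<and>
          (\<forall>k. (\<forall>j<k. \<not> halts_at pos S W r j) \<longrightarrow> cycle_ok alg v W C \<phi> \<omega> pos S r k))"

definition gathered :: "(bool \<Rightarrow> real \<Rightarrow> point) \<Rightarrow> bool" where
  "gathered pos \<longleftrightarrow> (\<exists>T. \<forall>t \<ge> T. pos True t = pos False t)"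

definition gather_event ::
  "algorithm \<Rightarrow> real \<Rightarrow> (bool \<Rightarrow> nat \<Rightarrow> real) \<Rightarrow> (bool \<Rightarrow> nat \<Rightarrow> real) \<Rightarrow>
   (bool \<Rightarrow> point \<Rightarrow> point) \<Rightarrow> (bool \<Rightarrow> point) \<Rightarrow> (bool \<times> nat \<times> nat \<Rightarrow> bool) set" where
  "gather_event alg v W C \<phi> p0 =
     {\<omega>. (\<exists>pos S. exec_ok alg v W C \<phi> p0 \<omega> pos S) \<and>
          (\<forall>pos S. exec_ok alg v W C \<phi> p0 \<omega> pos S \<longrightarrow> gathered pos)}"

end

theory Submission imports Defs begin

definition alg0 :: algorithm where
  "alg0 x y b = (if b 0 then y else x)"

lemma sim_inj:
  assumes "is_similarity f" "f x = f y" shows "x = y"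
proof -
  obtain c U b where c: "c > 0" "orthogonal_transformation U" "\<forall>x. f x = c *\<^sub>R U x + b"
    using assms(1) unfolding is_similarity_def by blast
  then have "c *\<^sub>R U x = c *\<^sub>R U y" using assms(2) by simp
  then have "U x = U y" using c(1) by simp
  then show ?thesis using orthogonal_transformation_inj[OF c(2)] by (auto dest: injD)
qed

lemma cyc_unf:
  "cycle_ok alg v W C \<phi> \<omega> pos S r k \<longleftrightarrow>
    (\<forall>t. S r k \<le> t \<and> t \<le> look_time S W r k + C r k \<longrightarrow> pos r t = pos r (S r k)) \<and>
    (if pos (\<not> r) (look_time S W r k) = pos r (S r k) then (\<forall>t \<ge> S r k. pos r t = pos r (S r k))
     else (\<exists>d. \<phi> r d = alg (\<phi> r (pos r (S r k))) (\<phi> r (pos (\<not> r) (look_time S W r k))) (\<lambda>i. \<omega> (r, k, i)) \<and>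
                  S r (Suc k) = look_time S W r k + C r k + dist (pos r (S r k)) d / v \<and>
                  (\<forall>t. look_time S W r k + C r k \<le> t \<and> t \<le> S r (Suc k) \<longrightarrow>
                       pos r t = pos r (S r k) + ((t - (look_time S W r k + C r k)) * v / dist (pos r (S r k)) d) *\<^sub>R (d - pos r (S r k)))))"
  by (simp only: cycle_ok_def Let_def)

lemma cyc_stat:
  assumes "cycle_ok alg v W C \<phi> \<omega> pos S r k" "S r k \<le> t" "t \<le> look_time S W r k + C r k"
  shows "pos r t = pos r (S r k)"
proof -
  have "\<forall>t. S r k \<le> t \<and> t \<le> look_time S W r k + C r k \<longrightarrow> pos r t = pos r (S r k)"
    using assms(1) unfolding cyc_unf by (rule conjunct1)
  then show ?thesis using assms(2,3) by blast
qed

lemma cyc_halt: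
  assumes "cycle_ok alg v W C \<phi> \<omega> pos S r k" "halts_at pos S W r k" "W r k \<ge> 0" "C r k \<ge> 0"
  shows "\<forall>t \<ge> S r k. pos r t = pos r (S r k)"
proof -
  have "pos r (look_time S W r k) = pos r (S r k)"
    using assms(3,4) by (intro cyc_stat[OF assms(1)]) (auto simp: look_time_def)
  then have e: "pos (\<not> r) (look_time S W r k) = pos r (S r k)"
    using assms(2) unfolding halts_at_def by simp
  show ?thesis using conjunct2[OF assms(1)[unfolded cyc_unf], unfolded if_P[OF e]] .
qed

lemma cyc_move:
  assumes "cycle_ok alg v W C \<phi> \<omega> pos S r k" "\<not> halts_at pos S W r k" "W r k \<ge> 0" "C r k \<ge> 0"
  shows "\<exists>d. \<phi> r d = alg (\<phi> r (pos r (S r k))) (\<phi> r (pos (\<not> r) (look_time S W r k))) (\<lambda>i. \<omega> (r, k, i)) \<and>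
                  S r (Suc k) = look_time S W r k + C r k + dist (pos r (S r k)) d / v \<and>
                  (\<forall>t. look_time S W r k + C r k \<le> t \<and> t \<le> S r (Suc k) \<longrightarrow>
                       pos r t = pos r (S r k) + ((t - (look_time S W r k + C r k)) * v / dist (pos r (S r k)) d) *\<^sub>R (d - pos r (S r k)))"
    and "pos (\<not> r) (look_time S W r k) \<noteq> pos r (S r k)"
proof -
  have "pos r (look_time S W r k) = pos r (S r k)"
    using assms(3,4) by (intro cyc_stat[OF assms(1)]) (auto simp: look_time_def)
  then show ne: "pos (\<not> r) (look_time S W r k) \<noteq> pos r (S r k)"
    using assms(2) unfolding halts_at_def by simp
  show "\<exists>d. \<phi> r d = alg (\<phi> r (pos r (S r k))) (\<phi> r (pos (\<not> r) (look_time S W r k))) (\<lambda>i. \<omega> (r, k, i)) \<and>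
                  S r (Suc k) = look_time S W r k + C r k + dist (pos r (S r k)) d / v \<and>
                  (\<forall>t. look_time S W r k + C r k \<le> t \<and> t \<le> S r (Suc k) \<longrightarrow>
                       pos r t = pos r (S r k) + ((t - (look_time S W r k + C r k)) * v / dist (pos r (S r k)) d) *\<^sub>R (d - pos r (S r k)))"
    using conjunct2[OF assms(1)[unfolded cyc_unf], unfolded if_not_P[OF ne]] .
qed

lemma coin_event:
  fixes N :: nat
  defines "E \<equiv> {\<omega>. \<omega> (True,0,0) \<and> (\<forall>k<N. \<not> \<omega> (False,k,0))}"
  shows "E \<in> sets coin_space \<and> measure coin_space E > 0"
proof -
  let ?M = "\<lambda>_::bool \<times> nat \<times> nat. measure_pmf (bernoulli_pmf (1/2))"
  define J where "J = insert (True,0,0) ((\<lambda>k. (False,k,0::nat)) ` {..<N})"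
  define X where "X = (\<lambda>i::bool \<times> nat \<times> nat. if i = (True,0,0) then {True} else {False})"
  have fin: "finite J" by (simp add: J_def)
  have EE: "E = prod_emb UNIV ?M J (Pi\<^sub>E J X)"
    unfolding E_def prod_emb_def J_def X_def by (auto simp: space_PiM PiE_iff)
  have sets: "E \<in> sets coin_space"
    unfolding EE coin_space_def by (rule sets_PiM_I) (auto simp: fin)
  have em: "emeasure coin_space E = (\<Prod>i\<in>J. emeasure (?M i) (X i))"
    unfolding EE coin_space_def
    by (rule emeasure_PiM_emb) (auto simp: fin prob_space_measure_pmf)
  have pos: "\<And>i. emeasure (?M i) (X i) = ennreal (1/2)"
    by (auto simp: X_def emeasure_pmf_single)
  have "emeasure coin_space E = (\<Prod>i\<in>J. ennreal (1/2))"
    by (simp only: em pos)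
  also have "\<dots> = ennreal (1/2) ^ card J" by (rule prod_constant)
  also have "\<dots> = ennreal ((1/2) ^ card J)" by (rule ennreal_power) simp
  finally have "emeasure coin_space E = ennreal ((1/2) ^ card J)" .
  then have "measure coin_space E = (1/2) ^ card J"
    by (simp add: measure_def)
  then show ?thesis using sets by simp
qed

context
  fixes \<tau> v :: real and W C :: "bool \<Rightarrow> nat \<Rightarrow> real" and \<phi> :: "bool \<Rightarrow> point \<Rightarrow> point"
    and p0 :: "bool \<Rightarrow> point"
  assumes tau: "\<tau> > 0" and vpos: "v > 0"
    and WC: "\<forall>r k. W r k \<ge> 0 \<and> C r k \<ge> 0 \<and> W r k + C r k > \<tau>"
    and sim: "\<forall>r. is_similarity (\<phi> r)"
begin

definition "Bt = W True 0 + C True 0"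
definition "At = Bt + dist (p0 True) (p0 False) / v"
definition "Nn = nat \<lceil>(At + W True 1) / \<tau>\<rceil>"

lemma Wge: "W r k \<ge> 0" and Cge: "C r k \<ge> 0" and WCg: "W r k + C r k > \<tau>"
  using WC by auto

lemma At_ge: "At \<ge> Bt" "Bt \<ge> W True 0" "Bt \<ge> 0"
  using vpos Wge Cge unfolding At_def Bt_def by auto

lemma Nn_ge: "real Nn * \<tau> \<ge> At + W True 1"
proof -
  have "At + W True 1 \<ge> 0" using At_ge Wge[of True 1] by linarith
  then have "real Nn = real_of_int \<lceil>(At + W True 1) / \<tau>\<rceil>" unfolding Nn_def using tau by simp
  also have "\<dots> \<ge> (At + W True 1) / \<tau>" by linarith
  finally show ?thesis using tau by (simp add: field_simps)
qed

lemma F_stays: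
  assumes ex: "exec_ok alg0 v W C \<phi> p0 \<omega> pos S"
    and bits: "\<forall>k<Nn. \<not> \<omega> (False,k,0)"
  shows "k \<le> Nn \<Longrightarrow> (\<forall>j<k. \<not> halts_at pos S W False j) \<Longrightarrow>
     (\<forall>t. 0 \<le> t \<and> t \<le> S False k \<longrightarrow> pos False t = p0 False) \<and> S False k \<ge> real k * \<tau>"
proof (induction k)
  case 0
  then show ?case using ex unfolding exec_ok_def by auto
next
  case (Suc k)
  from Suc.prems have IH: "(\<forall>t. 0 \<le> t \<and> t \<le> S False k \<longrightarrow> pos False t = p0 False) \<and> S False k \<ge> real k * \<tau>"
    by (intro Suc.IH) auto
  have Sk0: "S False k \<ge> 0" using IH tau by (meson mult_nonneg_nonneg of_nat_0_le_iff order.trans less_imp_le)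
  have q: "pos False (S False k) = p0 False" using IH Sk0 by auto
  have cyc: "cycle_ok alg0 v W C \<phi> \<omega> pos S False k"
    using ex Suc.prems unfolding exec_ok_def by auto
  have nh: "\<not> halts_at pos S W False k" using Suc.prems by auto
  obtain d where d: "\<phi> False d = alg0 (\<phi> False (pos False (S False k))) (\<phi> False (pos True (look_time S W False k))) (\<lambda>i. \<omega> (False, k, i))"
     "S False (Suc k) = look_time S W False k + C False k + dist (pos False (S False k)) d / v"
    using cyc_move(1)[OF cyc nh Wge Cge] by auto
  have "\<not> \<omega> (False,k,0)" using bits Suc.prems by auto
  then have "\<phi> False d = \<phi> False (pos False (S False k))" using d(1) by (simp add: alg0_def)
  then have "d = pos False (S False k)" using sim_inj sim by blast
  then have SS: "S False (Suc k) = look_time S W False k + C False k" using d(2) by simp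
  have "\<forall>t. 0 \<le> t \<and> t \<le> S False (Suc k) \<longrightarrow> pos False t = p0 False"
  proof (intro allI impI)
    fix t assume t: "0 \<le> t \<and> t \<le> S False (Suc k)"
    show "pos False t = p0 False"
    proof (cases "t \<le> S False k")
      case True then show ?thesis using IH t by auto
    next
      case False
      then show ?thesis using cyc_stat[OF cyc, of t] SS t q by auto
    qed
  qed
  moreover have "S False (Suc k) \<ge> real (Suc k) * \<tau>"
    using SS IH WCg[of False k] by (simp add: look_time_def algebra_simps)
  ultimately show ?case by blast
qed

lemma T_moves:
  assumes ex: "exec_ok alg0 v W C \<phi> p0 \<omega> pos S"
    and bit: "\<omega> (True,0,0)"
    and Fst: "\<forall>t. 0 \<le> t \<and> t \<le> At + W True 1 \<longrightarrow> pos False t = p0 False"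
  shows "\<forall>t \<ge> At. pos True t = p0 False"
proof -
  have S0: "S True 0 = 0" and p0T: "pos True 0 = p0 True"
    using ex unfolding exec_ok_def by auto
  have cyc0: "cycle_ok alg0 v W C \<phi> \<omega> pos S True 0"
    using ex unfolding exec_ok_def by auto
  have L0: "look_time S W True 0 = W True 0" using S0 by (simp add: look_time_def)
  have sF: "pos False (W True 0) = p0 False"
    using Fst At_ge Wge[of True 0] Wge[of True 1] by auto
  show ?thesis
  proof (cases "halts_at pos S W True 0")
    case True
    have H: "\<forall>t \<ge> S True 0. pos True t = pos True (S True 0)" using cyc_halt[OF cyc0 True Wge Cge] .
    have all: "\<forall>t \<ge> 0. pos True t = p0 True"
    proof (intro allI impI)
      fix t :: real assume "0 \<le> t"
      then show "pos True t = p0 True" using H[rule_format, of t] S0 p0T by simp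
    qed
    have "pos True (W True 0) = p0 False" using True sF L0 by (simp add: halts_at_def)
    then have "p0 True = p0 False" using all Wge[of True 0] by auto
    then show ?thesis using all At_ge by auto
  next
    case nh: False
    obtain d where d: "\<phi> True d = alg0 (\<phi> True (pos True (S True 0))) (\<phi> True (pos False (look_time S W True 0))) (\<lambda>i. \<omega> (True, 0, i))"
     "S True (Suc 0) = look_time S W True 0 + C True 0 + dist (pos True (S True 0)) d / v"
     "\<forall>t. look_time S W True 0 + C True 0 \<le> t \<and> t \<le> S True (Suc 0) \<longrightarrow>
                       pos True t = pos True (S True 0) + ((t - (look_time S W True 0 + C True 0)) * v / dist (pos True (S True 0)) d) *\<^sub>R (d - pos True (S True 0))"
      using cyc_move(1)[OF cyc0 nh Wge Cge, unfolded not_True_eq_False] by blast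
    have ne: "p0 False \<noteq> p0 True" using cyc_move(2)[OF cyc0 nh Wge Cge] S0 p0T L0 sF by simp
    have "\<phi> True d = \<phi> True (p0 False)" using d(1) bit L0 sF by (simp add: alg0_def)
    then have dd: "d = p0 False" using sim_inj sim by blast
    have S1: "S True 1 = At" using d(2) dd S0 p0T L0 by (simp add: At_def Bt_def)
    have D: "dist (p0 True) (p0 False) > 0" using ne by simp
    have "pos True At = p0 True + ((At - Bt) * v / dist (p0 True) (p0 False)) *\<^sub>R (p0 False - p0 True)"
      using d(3)[rule_format, of At] S1 dd S0 p0T L0 At_ge by (simp add: Bt_def)
    also have "(At - Bt) * v / dist (p0 True) (p0 False) = 1"
      using D vpos by (simp add: At_def)
    finally have pA: "pos True At = p0 False" by simp
    have cyc1: "cycle_ok alg0 v W C \<phi> \<omega> pos S True 1"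
      using ex nh unfolding exec_ok_def by auto
    have L1: "look_time S W True 1 = At + W True 1" using S1 by (simp add: look_time_def)
    have "pos True (At + W True 1) = p0 False"
      using cyc_stat[OF cyc1, of "At + W True 1"] S1 L1 pA Wge Cge by simp
    moreover have "pos False (At + W True 1) = p0 False"
      using Fst At_ge Wge[of True 1] by auto
    ultimately have h1: "halts_at pos S W True 1" using L1 by (simp add: halts_at_def)
    have H: "\<forall>t \<ge> S True 1. pos True t = pos True (S True 1)" using cyc_halt[OF cyc1 h1 Wge Cge] .
    show ?thesis
    proof (intro allI impI)
      fix t :: real assume "At \<le> t"
      then show "pos True t = p0 False" using H[rule_format, of t] S1 pA by simp
    qed
  qed
qed


lemma exec_gathers:
  assumes ex: "exec_ok alg0 v W C \<phi> p0 \<omega> pos S"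
    and bit: "\<omega> (True,0,0)" and bits: "\<forall>k<Nn. \<not> \<omega> (False,k,0)"
  shows "gathered pos"
proof -
  note FS = F_stays[OF ex bits]
  have ex_h: "\<exists>j. j \<le> Nn \<and> halts_at pos S W False j"
  proof (rule ccontr)
    assume "\<not> ?thesis"
    then have nh: "\<forall>j\<le>Nn. \<not> halts_at pos S W False j" by auto
    have F: "(\<forall>t. 0 \<le> t \<and> t \<le> S False Nn \<longrightarrow> pos False t = p0 False) \<and> S False Nn \<ge> real Nn * \<tau>"
      by (rule FS) (use nh in auto)
    then have "\<forall>t. 0 \<le> t \<and> t \<le> At + W True 1 \<longrightarrow> pos False t = p0 False"
      using Nn_ge by auto
    then have T: "\<forall>t \<ge> At. pos True t = p0 False" using T_moves[OF ex bit] by blast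
    have "\<forall>j<Nn. \<not> halts_at pos S W False j" using nh by auto
    then have cyc: "cycle_ok alg0 v W C \<phi> \<omega> pos S False Nn"
      using ex unfolding exec_ok_def by blast
    have SN0: "S False Nn \<ge> 0" "S False Nn \<ge> At"
      using F Nn_ge At_ge Wge[of True 1] by linarith+
    have "pos False (look_time S W False Nn) = pos False (S False Nn)"
      by (rule cyc_stat[OF cyc]) (use Wge[of False Nn] Cge[of False Nn] in \<open>auto simp: look_time_def\<close>)
    also have "\<dots> = p0 False" using F SN0 by auto
    also have "\<dots> = pos True (look_time S W False Nn)"
      using T SN0 Wge[of False Nn] by (simp add: look_time_def)
    finally have "halts_at pos S W False Nn" by (simp add: halts_at_def)
    then show False using nh by auto
  qed
  define j0 where "j0 = (LEAST j. halts_at pos S W False j)"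
  obtain j1 where j1: "j1 \<le> Nn" "halts_at pos S W False j1" using ex_h by blast
  have hj0: "halts_at pos S W False j0" unfolding j0_def using j1(2) by (rule LeastI)
  have "j0 \<le> j1" unfolding j0_def using j1(2) by (rule Least_le)
  then have j0N: "j0 \<le> Nn" using j1(1) by simp
  have nb: "\<forall>j<j0. \<not> halts_at pos S W False j"
  proof (intro allI impI)
    fix j assume "j < j0" then show "\<not> halts_at pos S W False j" unfolding j0_def by (rule not_less_Least)
  qed
  have F: "(\<forall>t. 0 \<le> t \<and> t \<le> S False j0 \<longrightarrow> pos False t = p0 False) \<and> S False j0 \<ge> real j0 * \<tau>"
    using FS[OF j0N nb] .
  have "real j0 * \<tau> \<ge> 0" using tau by simp
  then have S0: "S False j0 \<ge> 0" using F by linarith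
  have cyc: "cycle_ok alg0 v W C \<phi> \<omega> pos S False j0"
    using ex nb unfolding exec_ok_def by blast
  have H: "\<forall>t \<ge> S False j0. pos False t = pos False (S False j0)" using cyc_halt[OF cyc hj0 Wge Cge] .
  have Fall: "\<forall>t \<ge> 0. pos False t = p0 False"
  proof (intro allI impI)
    fix t :: real assume t: "0 \<le> t"
    show "pos False t = p0 False"
    proof (cases "t \<le> S False j0")
      case True then show ?thesis using F t by blast
    next
      case False
      then have "pos False t = pos False (S False j0)" by (intro H[rule_format]) simp
      then show ?thesis using F S0 by simp
    qed
  qed
  then have T: "\<forall>t \<ge> At. pos True t = p0 False" by (intro T_moves[OF ex bit]) auto
  show ?thesis unfolding gathered_def
  proof (intro exI[of _ At] allI impI)
    fix t assume "At \<le> t"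
    then show "pos True t = pos False t" using T Fall At_ge by simp
  qed
qed


definition "posT t = (if t \<le> Bt then p0 True else if t \<le> At then
   p0 True + ((t - Bt) * v / dist (p0 True) (p0 False)) *\<^sub>R (p0 False - p0 True) else p0 False)"
definition "pos0 r t = (if r then posT t else p0 False)"
definition "S0 r k = (if r then (if k = 0 then 0 else At) else (\<Sum>j<k. W False j + C False j))"

lemma posT_before: "t \<le> Bt \<Longrightarrow> posT t = p0 True"
  by (simp add: posT_def)

lemma posT_eq: "p0 True = p0 False \<Longrightarrow> posT t = p0 True"
  by (simp add: posT_def)

lemma posT_after: "t \<ge> At \<Longrightarrow> posT t = p0 False"
proof -
  assume t: "t \<ge> At"
  show ?thesis
  proof (cases "p0 True = p0 False")
    case True then show ?thesis using posT_eq by simp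
  next
    case False
    then have D: "dist (p0 True) (p0 False) > 0" by simp
    then have AB: "At > Bt" using vpos by (simp add: At_def)
    show ?thesis
    proof (cases "t = At")
      case True
      have "(At - Bt) * v / dist (p0 True) (p0 False) = 1"
        using D vpos by (simp add: At_def)
      then show ?thesis using True AB vpos by (simp add: posT_def)
    next
      case False
      then show ?thesis using t AB by (simp add: posT_def)
    qed
  qed
qed

lemma SF_ge: "(\<Sum>j<k. W False j + C False j) \<ge> real k * \<tau>"
proof -
  have "(\<Sum>j<k. \<tau>) \<le> (\<Sum>j<k. W False j + C False j)"
    by (rule sum_mono) (use WCg in \<open>simp add: less_imp_le\<close>)
  then show ?thesis by simp
qed

lemma exec_exists:
  assumes bit: "\<omega> (True,0,0)" and bits: "\<forall>k<Nn. \<not> \<omega> (False,k,0)"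
  shows "exec_ok alg0 v W C \<phi> p0 \<omega> pos0 S0"
proof -
  have AB: "At \<ge> Bt" "Bt \<ge> 0" using At_ge by auto
  have cF: "cycle_ok alg0 v W C \<phi> \<omega> pos0 S0 False k" for k
  proof -
    let ?L = "look_time S0 W False k"
    have L: "?L = (\<Sum>j<k. W False j + C False j) + W False k" by (simp add: look_time_def S0_def)
    have SS: "S0 False (Suc k) = ?L + C False k" by (simp add: L S0_def)
    have part2: "\<exists>d. \<phi> False d = alg0 (\<phi> False (p0 False)) (\<phi> False (posT ?L)) (\<lambda>i. \<omega> (False, k, i)) \<and>
                  S0 False (Suc k) = ?L + C False k + dist (p0 False) d / v \<and>
                  (\<forall>t. ?L + C False k \<le> t \<and> t \<le> S0 False (Suc k) \<longrightarrow>
                       p0 False = p0 False + ((t - (?L + C False k)) * v / dist (p0 False) d) *\<^sub>R (d - p0 False))"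
      if ne: "posT ?L \<noteq> p0 False"
    proof -
      have "?L < At"
      proof (rule ccontr)
        assume "\<not> ?L < At"
        then have "posT ?L = p0 False" by (intro posT_after) simp
        with ne show False by simp
      qed
      moreover have "real k * \<tau> \<le> ?L" using L SF_ge[of k] Wge[of False k] by linarith
      ultimately have "real k * \<tau> < real Nn * \<tau>" using Nn_ge Wge[of True 1] by linarith
      then have "k < Nn" using tau by simp
      then have "\<not> \<omega> (False,k,0)" using bits by simp
      then show ?thesis using SS by (intro exI[of _ "p0 False"]) (simp add: alg0_def)
    qed
    show ?thesis unfolding cyc_unf
      using part2 by (simp add: pos0_def)
  qed
  have cT0: "cycle_ok alg0 v W C \<phi> \<omega> pos0 S0 True 0"
  proof -
    have L: "look_time S0 W True 0 = W True 0" by (simp add: look_time_def S0_def)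
    have p1: "\<forall>t. S0 True 0 \<le> t \<and> t \<le> look_time S0 W True 0 + C True 0 \<longrightarrow> pos0 True t = pos0 True (S0 True 0)"
      using L AB posT_before by (simp add: pos0_def S0_def Bt_def)
    have p2: "(\<forall>t \<ge> S0 True 0. pos0 True t = pos0 True (S0 True 0))" if "p0 False = p0 True"
      using that posT_eq by (simp add: pos0_def)
    have p3: "\<exists>d. \<phi> True d = alg0 (\<phi> True (pos0 True (S0 True 0))) (\<phi> True (pos0 False (look_time S0 W True 0))) (\<lambda>i. \<omega> (True, 0, i)) \<and>
                  S0 True (Suc 0) = look_time S0 W True 0 + C True 0 + dist (pos0 True (S0 True 0)) d / v \<and>
                  (\<forall>t. look_time S0 W True 0 + C True 0 \<le> t \<and> t \<le> S0 True (Suc 0) \<longrightarrow>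
                       pos0 True t = pos0 True (S0 True 0) + ((t - (look_time S0 W True 0 + C True 0)) * v / dist (pos0 True (S0 True 0)) d) *\<^sub>R (d - pos0 True (S0 True 0)))"
    proof (intro exI[of _ "p0 False"] conjI allI impI)
      have q: "pos0 True (S0 True 0) = p0 True" using AB posT_before by (simp add: pos0_def S0_def)
      show "\<phi> True (p0 False) = alg0 (\<phi> True (pos0 True (S0 True 0))) (\<phi> True (pos0 False (look_time S0 W True 0))) (\<lambda>i. \<omega> (True, 0, i))"
        using bit by (simp add: alg0_def pos0_def)
      show "S0 True (Suc 0) = look_time S0 W True 0 + C True 0 + dist (pos0 True (S0 True 0)) (p0 False) / v"
        using q L by (simp add: S0_def At_def Bt_def)
      fix t assume t: "look_time S0 W True 0 + C True 0 \<le> t \<and> t \<le> S0 True (Suc 0)"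
      then have t': "Bt \<le> t" "t \<le> At" using L by (auto simp: Bt_def S0_def)
      show "pos0 True t = pos0 True (S0 True 0) + ((t - (look_time S0 W True 0 + C True 0)) * v / dist (pos0 True (S0 True 0)) (p0 False)) *\<^sub>R (p0 False - pos0 True (S0 True 0))"
        using t' q L by (simp add: pos0_def posT_def Bt_def)
    qed
    have q: "pos0 True (S0 True 0) = p0 True" using AB posT_before by (simp add: pos0_def S0_def)
    have c: "pos0 (\<not> True) (look_time S0 W True 0) = pos0 True (S0 True 0) \<longleftrightarrow> p0 False = p0 True"
      using q by (simp add: pos0_def)
    show ?thesis
    proof (cases "p0 False = p0 True")
      case True
      show ?thesis unfolding cyc_unf if_P[OF c[THEN iffD2, OF True]]
        using p1 p2[OF True] by (intro conjI)
    next
      case False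
      have nc: "\<not> (pos0 False (look_time S0 W True 0) = pos0 True (S0 True 0))" using c False by simp
      show ?thesis unfolding cyc_unf not_True_eq_False if_not_P[OF nc]
        using p1 p3 by (intro conjI)
    qed
  qed
  have hT1: "halts_at pos0 S0 W True 1"
    using posT_after[of "At + W True 1"] Wge[of True 1]
    by (simp add: halts_at_def look_time_def S0_def pos0_def)
  have cT1: "cycle_ok alg0 v W C \<phi> \<omega> pos0 S0 True 1"
  proof -
    have q: "pos0 True (S0 True 1) = p0 False" using posT_after by (simp add: pos0_def S0_def)
    have p1: "\<forall>t. S0 True 1 \<le> t \<and> t \<le> look_time S0 W True 1 + C True 1 \<longrightarrow> pos0 True t = pos0 True (S0 True 1)"
      using q posT_after by (simp add: pos0_def S0_def)
    have p2: "\<forall>t \<ge> S0 True 1. pos0 True t = pos0 True (S0 True 1)"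
      using q posT_after by (simp add: pos0_def S0_def)
    have c: "pos0 False (look_time S0 W True 1) = pos0 True (S0 True 1)"
      using q by (simp add: pos0_def)
    show ?thesis unfolding cyc_unf not_True_eq_False if_P[OF c]
      using p1 p2 by (intro conjI)
  qed
  have r1: "S0 r 0 = 0" for r by (simp add: S0_def)
  have r2: "pos0 r 0 = p0 r" for r
  proof (cases r)
    case True then show ?thesis using posT_before[of 0] AB by (simp add: pos0_def)
  next
    case False then show ?thesis by (simp add: pos0_def)
  qed
  have r3: "cycle_ok alg0 v W C \<phi> \<omega> pos0 S0 r k" if nh: "\<forall>j<k. \<not> halts_at pos0 S0 W r j" for r k
  proof (cases r)
    case False then show ?thesis using cF by simp
  next
    case True
    have "k = 0 \<or> k = 1"
    proof (rule ccontr)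
      assume "\<not> (k = 0 \<or> k = 1)"
      then have "1 < k" by simp
      then have "\<not> halts_at pos0 S0 W r 1" using nh by simp
      then show False using hT1 True by simp
    qed
    then show ?thesis using cT0 cT1 True by (elim disjE) simp_all
  qed
  show ?thesis unfolding exec_ok_def using r1 r2 r3 by blast
qed

lemma main_ctx: "\<exists>E \<in> sets coin_space. E \<subseteq> gather_event alg0 v W C \<phi> p0 \<and> measure coin_space E > 0"
proof -
  define E where "E = {\<omega> :: bool \<times> nat \<times> nat \<Rightarrow> bool. \<omega> (True,0,0) \<and> (\<forall>k<Nn. \<not> \<omega> (False,k,0))}"
  have "E \<in> sets coin_space \<and> measure coin_space E > 0" unfolding E_def by (rule coin_event)
  moreover have "E \<subseteq> gather_event alg0 v W C \<phi> p0"
  proof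
    fix \<omega> assume "\<omega> \<in> E"
    then have b: "\<omega> (True,0,0)" "\<forall>k<Nn. \<not> \<omega> (False,k,0)" by (auto simp: E_def)
    show "\<omega> \<in> gather_event alg0 v W C \<phi> p0"
      unfolding gather_event_def using exec_exists[OF b] exec_gathers[OF _ b] by blast
  qed
  ultimately show ?thesis by blast
qed

end

theorem theorem5:
  fixes \<tau> :: real
  assumes "\<tau> > 0"
  shows "\<exists>alg :: algorithm.
    \<forall>(v::real) (W::bool \<Rightarrow> nat \<Rightarrow> real) (C::bool \<Rightarrow> nat \<Rightarrow> real)
      (\<phi>::bool \<Rightarrow> point \<Rightarrow> point) (p0::bool \<Rightarrow> point).
      v > 0 \<and> (\<forall>r k. W r k \<ge> 0 \<and> C r k \<ge> 0 \<and> W r k + C r k > \<tau>) \<and>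
      (\<forall>r. is_similarity (\<phi> r)) \<longrightarrow>
      (\<exists>E \<in> sets coin_space. E \<subseteq> gather_event alg v W C \<phi> p0 \<and> measure coin_space E > 0)"
proof (intro exI[of _ alg0] allI impI)
  fix v :: real and W C :: "bool \<Rightarrow> nat \<Rightarrow> real" and \<phi> :: "bool \<Rightarrow> point \<Rightarrow> point" and p0 :: "bool \<Rightarrow> point"
  assume h: "v > 0 \<and> (\<forall>r k. W r k \<ge> 0 \<and> C r k \<ge> 0 \<and> W r k + C r k > \<tau>) \<and> (\<forall>r. is_similarity (\<phi> r))"
  show "\<exists>E \<in> sets coin_space. E \<subseteq> gather_event alg0 v W C \<phi> p0 \<and> measure coin_space E > 0"
    using main_ctx[OF assms] h by blast
qed

end
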